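(* Let $G$ be a finite connected bipartite $\mathcal{C}$-$\mathrm{HH}$ graph with bipartition $(X,Y)$. (i) If the $6$-cycle $C_6$ or the two-squares graph embeds in $G$, then $\mathrm{diam}(G)=3$. (ii) If $\mathrm{diam}(G)=3$, then for each $k\le\Delta(G)$ every $k$-element subset of $X$ and every $k$-element subset of $Y$ has a common neighbour.
   Context: Subgraphs are induced; "embeds" means is isomorphic to an induced subgraph. A homomorphism maps edges to edges. A graph $G$ is $\mathcal{C}$-$\mathrm{HH}$ if every homomorphism from a finite connected induced subgraph of $G$ into $G$ extends to a homomorphism $G\to G$. The two-squares graph is the $6$-cycle $v_1\dots v_6v_1$ with the single chord $v_3v_6$. $\mathrm{diam}(G)$ is the diameter and $\Delta(G)$ the maximum degree. A common neighbour of a vertex set $S$ is a vertex adjacent to every vertex of $S$. *)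

theory Defs
  imports Main
begin

definition graph :: "'a set \<Rightarrow> ('a \<Rightarrow> 'a \<Rightarrow> bool) \<Rightarrow> bool" where
  "graph V E \<longleftrightarrow> finite V \<and> (\<forall>x y. E x y \<longrightarrow> x \<in> V \<and> y \<in> V)
     \<and> (\<forall>x y. E x y \<longrightarrow> E y x) \<and> (\<forall>x. \<not> E x x)"

definition walk :: "'a set \<Rightarrow> ('a \<Rightarrow> 'a \<Rightarrow> bool) \<Rightarrow> 'a list \<Rightarrow> bool" where
  "walk S E xs \<longleftrightarrow> xs \<noteq> [] \<and> set xs \<subseteq> S \<and>
     (\<forall>i. Suc i < length xs \<longrightarrow> E (xs ! i) (xs ! Suc i))"

definition connected :: "'a set \<Rightarrow> ('a \<Rightarrow> 'a \<Rightarrow> bool) \<Rightarrow> bool" where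
  "connected S E \<longleftrightarrow> S \<noteq> {} \<and>
     (\<forall>x\<in>S. \<forall>y\<in>S. \<exists>xs. walk S E xs \<and> hd xs = x \<and> last xs = y)"

definition gdist :: "'a set \<Rightarrow> ('a \<Rightarrow> 'a \<Rightarrow> bool) \<Rightarrow> 'a \<Rightarrow> 'a \<Rightarrow> nat" where
  "gdist V E x y = (LEAST n. \<exists>xs. walk V E xs \<and> hd xs = x \<and> last xs = y \<and> length xs = Suc n)"

definition diam :: "'a set \<Rightarrow> ('a \<Rightarrow> 'a \<Rightarrow> bool) \<Rightarrow> nat" where
  "diam V E = Max {gdist V E x y | x y. x \<in> V \<and> y \<in> V}"

definition max_degree :: "'a set \<Rightarrow> ('a \<Rightarrow> 'a \<Rightarrow> bool) \<Rightarrow> nat" where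
  "max_degree V E = Max ((\<lambda>v. card {u \<in> V. E v u}) ` V)"

definition hom :: "'a set \<Rightarrow> ('a \<Rightarrow> 'a \<Rightarrow> bool) \<Rightarrow> 'b set \<Rightarrow> ('b \<Rightarrow> 'b \<Rightarrow> bool) \<Rightarrow> ('a \<Rightarrow> 'b) \<Rightarrow> bool" where
  "hom S E W F f \<longleftrightarrow> f ` S \<subseteq> W \<and> (\<forall>x\<in>S. \<forall>y\<in>S. E x y \<longrightarrow> F (f x) (f y))"

definition C_HH :: "'a set \<Rightarrow> ('a \<Rightarrow> 'a \<Rightarrow> bool) \<Rightarrow> bool" where
  "C_HH V E \<longleftrightarrow> (\<forall>S f. S \<subseteq> V \<and> finite S \<and> connected S E \<and> hom S E V E f \<longrightarrow>
      (\<exists>g. hom V E V E g \<and> (\<forall>x\<in>S. g x = f x)))"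

definition embeds :: "'b set \<Rightarrow> ('b \<Rightarrow> 'b \<Rightarrow> bool) \<Rightarrow> 'a set \<Rightarrow> ('a \<Rightarrow> 'a \<Rightarrow> bool) \<Rightarrow> bool" where
  "embeds W F V E \<longleftrightarrow> (\<exists>f. inj_on f W \<and> f ` W \<subseteq> V \<and>
      (\<forall>x\<in>W. \<forall>y\<in>W. F x y \<longleftrightarrow> E (f x) (f y)))"

text \<open>The 6-cycle on vertices 0..5 (v_{i+1} is vertex i).\<close>
definition C6_edge :: "nat \<Rightarrow> nat \<Rightarrow> bool" where
  "C6_edge i j \<longleftrightarrow> i < 6 \<and> j < 6 \<and> (j = (i + 1) mod 6 \<or> i = (j + 1) mod 6)"

text \<open>Two-squares graph: C6 plus chord v3 v6, i.e. vertices 2 and 5.\<close>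
definition two_squares_edge :: "nat \<Rightarrow> nat \<Rightarrow> bool" where
  "two_squares_edge i j \<longleftrightarrow> C6_edge i j \<or> (i = 2 \<and> j = 5) \<or> (i = 5 \<and> j = 2)"

definition bipartition :: "'a set \<Rightarrow> ('a \<Rightarrow> 'a \<Rightarrow> bool) \<Rightarrow> 'a set \<Rightarrow> 'a set \<Rightarrow> bool" where
  "bipartition V E X Y \<longleftrightarrow> X \<union> Y = V \<and> X \<inter> Y = {} \<and>
     (\<forall>x y. E x y \<longrightarrow> (x \<in> X \<and> y \<in> Y) \<or> (x \<in> Y \<and> y \<in> X))"

definition common_neighbour :: "'a set \<Rightarrow> ('a \<Rightarrow> 'a \<Rightarrow> bool) \<Rightarrow> 'a set \<Rightarrow> 'a \<Rightarrow> bool" where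
  "common_neighbour V E S v \<longleftrightarrow> v \<in> V \<and> (\<forall>s\<in>S. E v s)"

end

theory Submission
  imports Defs
begin


lemma walk_single[simp]: "walk S E [x] \<longleftrightarrow> x \<in> S"
  unfolding walk_def by auto

lemma walk_Cons2[simp]: "walk S E (x#y#xs) \<longleftrightarrow> x \<in> S \<and> E x y \<and> walk S E (y#xs)"
proof
  assume w: "walk S E (x#y#xs)"
  then have "E x y" unfolding walk_def by (metis length_Cons nth_Cons_0 nth_Cons_Suc zero_less_Suc Suc_less_eq)
  moreover have "walk S E (y#xs)" unfolding walk_def
  proof (intro conjI allI impI)
    fix i assume "Suc i < length (y#xs)"
    then have "Suc (Suc i) < length (x#y#xs)" by simp
    then have "E ((x#y#xs) ! Suc i) ((x#y#xs) ! Suc (Suc i))" using w unfolding walk_def by blast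
    then show "E ((y#xs) ! i) ((y#xs) ! Suc i)" by simp
  qed (use w in \<open>auto simp: walk_def\<close>)
  ultimately show "x \<in> S \<and> E x y \<and> walk S E (y#xs)" using w unfolding walk_def by auto
next
  assume a: "x \<in> S \<and> E x y \<and> walk S E (y#xs)"
  show "walk S E (x#y#xs)" unfolding walk_def
  proof (intro conjI allI impI)
    fix i assume i: "Suc i < length (x#y#xs)"
    show "E ((x#y#xs) ! i) ((x#y#xs) ! Suc i)"
    proof (cases i)
      case 0 then show ?thesis using a by simp
    next
      case (Suc j) then show ?thesis using a i unfolding walk_def by auto
    qed
  qed (use a in \<open>auto simp: walk_def\<close>)
qed

lemma walk_nonempty: "walk S E xs \<Longrightarrow> xs \<noteq> []" unfolding walk_def by auto

lemma walk_append:
  "walk S E xs \<Longrightarrow> walk S E ys \<Longrightarrow> E (last xs) (hd ys) \<Longrightarrow> walk S E (xs @ ys)"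
proof (induction xs)
  case Nil then show ?case by (simp add: walk_def)
next
  case (Cons x xs)
  show ?case
  proof (cases xs)
    case Nil
    then show ?thesis using Cons by (cases ys) (auto simp: walk_def[of _ _ "[]"] walk_def[of _ _ "[x]"])
  next
    case (Cons y zs)
    then show ?thesis using Cons.prems Cons.IH by auto
  qed
qed

lemma walk_rev:
  assumes sym: "\<And>x y. E x y \<Longrightarrow> E y x"
  shows "walk S E xs \<Longrightarrow> walk S E (rev xs)"
proof (induction xs)
  case Nil then show ?case by (simp add: walk_def)
next
  case (Cons x xs)
  show ?case
  proof (cases xs)
    case Nil then show ?thesis using Cons by simp
  next
    case (Cons y zs)
    have "walk S E (rev xs)" using Cons.IH Cons.prems \<open>xs = y#zs\<close> by simp
    moreover have "E (last (rev xs)) (hd [x])" using Cons.prems \<open>xs = y#zs\<close> sym by simp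
    ultimately have "walk S E (rev xs @ [x])" using Cons.prems
      by (intro walk_append) (auto simp: walk_def)
    then show ?thesis by simp
  qed
qed

lemma walk_tl: "walk S E (x#y#xs) \<Longrightarrow> walk S E (y#xs)" by simp

lemma connected_hub:
  assumes sym: "\<And>x y. E x y \<Longrightarrow> E y x" and h: "h \<in> S"
    and paths: "\<And>x. x \<in> S \<Longrightarrow> \<exists>xs. walk S E xs \<and> hd xs = h \<and> last xs = x"
  shows "connected S E"
  unfolding connected_def
proof (intro conjI ballI)
  show "S \<noteq> {}" using h by auto
  fix x y assume x: "x \<in> S" and y: "y \<in> S"
  obtain px where px: "walk S E px" "hd px = h" "last px = x" using paths[OF x] by blast
  obtain py where py: "walk S E py" "hd py = h" "last py = y" using paths[OF y] by blast
  have rpx: "walk S E (rev px)" using walk_rev[OF sym px(1)] .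
  have pxne: "px \<noteq> []" using px(1) walk_nonempty by auto
  have pyne: "py \<noteq> []" using py(1) walk_nonempty by auto
  show "\<exists>xs. walk S E xs \<and> hd xs = x \<and> last xs = y"
  proof (cases "tl py")
    case Nil
    then have "py = [h]" using pyne py(2) by (cases py) auto
    then have "y = h" using py(3) by simp
    then show ?thesis using rpx pxne px by (intro exI[of _ "rev px"]) (auto simp: hd_rev last_rev)
  next
    case (Cons a as)
    then have pyeq: "py = h # a # as" using pyne py(2) by (cases py) auto
    have "walk S E (a#as)" using py(1) pyeq by simp
    moreover have "E (last (rev px)) (hd (a#as))" using py(1) pyeq px(2) pxne by (simp add: last_rev)
    ultimately have "walk S E (rev px @ (a#as))" using rpx by (intro walk_append)
    then show ?thesis using pxne px py pyeq
      by (intro exI[of _ "rev px @ (a#as)"]) (auto simp: hd_rev)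
  qed
qed

lemma walk_take: "walk S E xs \<Longrightarrow> 0 < n \<Longrightarrow> walk S E (take n xs)"
  unfolding walk_def by (auto dest: in_set_takeD)

lemma connected_of_walk:
  assumes sym: "\<And>x y. E x y \<Longrightarrow> E y x" and w: "walk S E xs" and s: "set xs = S"
  shows "connected S E"
proof (rule connected_hub[OF sym, where h="hd xs"])
  have ne: "xs \<noteq> []" using w walk_nonempty by auto
  then show "hd xs \<in> S" using s by auto
  fix x assume "x \<in> S"
  then obtain i where i: "i < length xs" "xs ! i = x" using s by (metis in_set_conv_nth)
  have "walk S E (take (Suc i) xs)" using walk_take[OF w] by auto
  moreover have "hd (take (Suc i) xs) = hd xs" using ne by (simp add: hd_take)
  moreover have "last (take (Suc i) xs) = x" using i by (simp add: take_Suc_conv_app_nth)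
  ultimately show "\<exists>ys. walk S E ys \<and> hd ys = hd xs \<and> last ys = x" by blast
qed



lemma graph_sym: "graph V E \<Longrightarrow> E x y \<Longrightarrow> E y x" unfolding graph_def by blast
lemma graph_irr: "graph V E \<Longrightarrow> \<not> E x x" unfolding graph_def by blast
lemma graph_V1: "graph V E \<Longrightarrow> E x y \<Longrightarrow> x \<in> V" unfolding graph_def by blast
lemma graph_V2: "graph V E \<Longrightarrow> E x y \<Longrightarrow> y \<in> V" unfolding graph_def by blast
lemma graph_fin: "graph V E \<Longrightarrow> finite V" unfolding graph_def by blast

lemma bip_sym: "bipartition V E P Q \<Longrightarrow> bipartition V E Q P"
  unfolding bipartition_def by blast
lemma bip_PQ: "bipartition V E P Q \<Longrightarrow> E x y \<Longrightarrow> x \<in> P \<Longrightarrow> y \<in> Q"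
  unfolding bipartition_def by blast
lemma bip_QP: "bipartition V E P Q \<Longrightarrow> E x y \<Longrightarrow> x \<in> Q \<Longrightarrow> y \<in> P"
  unfolding bipartition_def by blast
lemma bip_PP: "bipartition V E P Q \<Longrightarrow> E x y \<Longrightarrow> x \<in> P \<Longrightarrow> y \<in> P \<Longrightarrow> False"
  unfolding bipartition_def by blast
lemma bip_QQ: "bipartition V E P Q \<Longrightarrow> E x y \<Longrightarrow> x \<in> Q \<Longrightarrow> y \<in> Q \<Longrightarrow> False"
  unfolding bipartition_def by blast
lemma bip_V: "bipartition V E P Q \<Longrightarrow> V = P \<union> Q" unfolding bipartition_def by blast
lemma bip_disj: "bipartition V E P Q \<Longrightarrow> x \<in> P \<Longrightarrow> x \<in> Q \<Longrightarrow> False" unfolding bipartition_def by blast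

lemma walk_Cons_in: "walk S E (x#xs) \<Longrightarrow> x \<in> S" unfolding walk_def by auto

lemma gdist_le:
  assumes "walk V E xs" "hd xs = x" "last xs = y"
  shows "gdist V E x y \<le> length xs - 1"
proof -
  have ne: "xs \<noteq> []" using assms walk_nonempty by auto
  have "\<exists>ys. walk V E ys \<and> hd ys = x \<and> last ys = y \<and> length ys = Suc (length xs - 1)"
    using assms ne by (intro exI[of _ xs]) auto
  then show ?thesis unfolding gdist_def by (rule Least_le)
qed

lemma gdist_walk:
  assumes "connected V E" "x \<in> V" "y \<in> V"
  shows "\<exists>xs. walk V E xs \<and> hd xs = x \<and> last xs = y \<and> length xs = Suc (gdist V E x y)"
proof -
  obtain xs where xs: "walk V E xs" "hd xs = x" "last xs = y" using assms unfolding connected_def by blast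
  have ne: "xs \<noteq> []" using xs walk_nonempty by auto
  have "\<exists>n. \<exists>ys. walk V E ys \<and> hd ys = x \<and> last ys = y \<and> length ys = Suc n"
    using xs ne by (intro exI[of _ "length xs - 1"] exI[of _ xs]) auto
  from LeastI_ex[OF this] show ?thesis unfolding gdist_def .
qed

lemma walk_shorten:
  assumes sc: "\<And>a b c d e. walk V E [a,b,c,d,e] \<Longrightarrow> \<exists>u\<in>V. E a u \<and> E u e"
  shows "walk V E xs \<Longrightarrow> \<exists>ys. walk V E ys \<and> hd ys = hd xs \<and> last ys = last xs \<and> length ys \<le> 4"
proof (induction "length xs" arbitrary: xs rule: less_induct)
  case less
  show ?case
  proof (cases "length xs \<le> 4")
    case True then show ?thesis using less.prems by blast
  next
    case False
    then obtain a b c d e rest where xs: "xs = a#b#c#d#e#rest"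
      by (cases xs; cases "tl xs"; cases "tl (tl xs)"; cases "tl (tl (tl xs))"; cases "tl (tl (tl (tl xs)))") auto
    have w5: "walk V E [a,b,c,d,e]" using less.prems xs walk_Cons_in[of V E e rest] by simp
    obtain u where u: "u \<in> V" "E a u" "E u e" using sc[OF w5] by blast
    have we: "walk V E (e#rest)" using less.prems xs by simp
    have "walk V E (a#u#e#rest)" using u we less.prems xs by simp
    moreover have "length (a#u#e#rest) < length xs" using xs by simp
    ultimately obtain ys where "walk V E ys" "hd ys = hd (a#u#e#rest)" "last ys = last (a#u#e#rest)" "length ys \<le> 4"
      using less.hyps by blast
    then show ?thesis using xs by auto
  qed
qed



lemma shortcut_generic:
  fixes \<phi> :: "nat \<Rightarrow> 'a" and F :: "nat \<Rightarrow> nat \<Rightarrow> bool"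
  assumes G: "graph V E" and H: "C_HH V E"
    and inj: "inj_on \<phi> {0..<6}" and sub: "\<phi> ` {0..<6} \<subseteq> V"
    and iso: "\<forall>x\<in>{0..<6}. \<forall>y\<in>{0..<6}. F x y \<longleftrightarrow> E (\<phi> x) (\<phi> y)"
    and idx: "ia < 6" "ib < 6" "ic < 6" "idd < 6" "ie < 6" "m < 6"
    and dist: "distinct [ia,ib,ic,idd,ie]"
    and Fe: "F ia ib" "F ib ic" "F ic idd" "F idd ie" "F m ia" "F m ie"
    and only: "\<And>x y. x \<in> {ia,ib,ic,idd,ie} \<Longrightarrow> y \<in> {ia,ib,ic,idd,ie} \<Longrightarrow> F x y \<Longrightarrow>
        (x = ia \<and> y = ib) \<or> (x = ib \<and> y = ic) \<or> (x = ic \<and> y = idd) \<or> (x = idd \<and> y = ie) \<or>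
        (y = ia \<and> x = ib) \<or> (y = ib \<and> x = ic) \<or> (y = ic \<and> x = idd) \<or> (y = idd \<and> x = ie)"
    and w: "walk V E [a,b,c,d,e]"
  shows "\<exists>u\<in>V. E a u \<and> E u e"
proof -
  have sym: "\<And>x y. E x y \<Longrightarrow> E y x" using graph_sym[OF G] by blast
  have wv: "a \<in> V" "b \<in> V" "c \<in> V" "d \<in> V" "e \<in> V" and we: "E a b" "E b c" "E c d" "E d e"
    using w walk_Cons_in[of V E e "[]"] by auto
  define q where "q x = (if x = ia then a else if x = ib then b else if x = ic then c else if x = idd then d else e)" for x
  define f where "f x = q (the_inv_into {0..<6} \<phi> x)" for x
  have fphi: "f (\<phi> i) = q i" if "i < 6" for i
    using that inj unfolding f_def by (simp add: the_inv_into_f_f)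
  have q: "q ia = a" "q ib = b" "q ic = c" "q idd = d" "q ie = e"
    using dist unfolding q_def by auto
  define T where "T = \<phi> ` {ia,ib,ic,idd,ie}"
  have TV: "T \<subseteq> V" using sub idx unfolding T_def by auto
  have Tfin: "finite T" unfolding T_def by simp
  have ph: "\<phi> i \<in> V" if "i < 6" for i using sub that by auto
  have Eph: "E (\<phi> x) (\<phi> y)" if "F x y" "x < 6" "y < 6" for x y using iso that by auto
  have hom: "hom T E V E f"
    unfolding hom_def
  proof (intro conjI ballI impI)
    show "f ` T \<subseteq> V" using wv idx fphi q unfolding T_def by auto
  next
    fix x y assume x: "x \<in> T" and y: "y \<in> T" and exy: "E x y"
    obtain i where i: "i \<in> {ia,ib,ic,idd,ie}" "x = \<phi> i" using x unfolding T_def by auto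
    obtain j where j: "j \<in> {ia,ib,ic,idd,ie}" "y = \<phi> j" using y unfolding T_def by auto
    have i6: "i < 6" and j6: "j < 6" using i j idx by auto
    have "F i j" using iso exy i j i6 j6 by auto
    then have "E (q i) (q j)" using only[OF i(1) j(1)] q we sym by auto
    then show "E (f x) (f y)" using fphi i6 j6 i j by simp
  qed
  have wT: "walk T E [\<phi> ia, \<phi> ib, \<phi> ic, \<phi> idd, \<phi> ie]"
    using Eph Fe idx unfolding T_def by simp
  have conn: "connected T E"
    by (rule connected_of_walk[OF _ wT]) (use sym in \<open>auto simp: T_def\<close>)
  obtain g where g: "hom V E V E g" "\<forall>x\<in>T. g x = f x"
    using H TV Tfin conn hom unfolding C_HH_def by blast
  have gi0: "g (\<phi> ia) = a" and gi4: "g (\<phi> ie) = e"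
    using g(2) fphi q idx unfolding T_def by auto
  have "E (g (\<phi> m)) (g (\<phi> ia))" using g(1) Eph[OF Fe(5)] idx ph unfolding hom_def by blast
  moreover have "E (g (\<phi> m)) (g (\<phi> ie))" using g(1) Eph[OF Fe(6)] idx ph unfolding hom_def by blast
  moreover have "g (\<phi> m) \<in> V" using g(1) ph idx unfolding hom_def by blast
  ultimately show ?thesis using gi0 gi4 sym by blast
qed

lemma shortcut:
  assumes G: "graph V E" and H: "C_HH V E"
    and emb: "embeds {0..<6} C6_edge V E \<or> embeds {0..<6} two_squares_edge V E"
    and w: "walk V E [a,b,c,d,e]"
  shows "\<exists>u\<in>V. E a u \<and> E u e"
  using emb
proof
  assume "embeds {0..<6} C6_edge V E"
  then obtain \<phi> where p: "inj_on \<phi> {0..<6}" "\<phi> ` {0..<6} \<subseteq> V"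
      "\<forall>x\<in>{0..<6}. \<forall>y\<in>{0..<6}. C6_edge x y \<longleftrightarrow> E (\<phi> x) (\<phi> y)"
    unfolding embeds_def by blast
  show ?thesis
    apply (rule shortcut_generic[OF G H p, where ia=2 and ib=3 and ic=4 and idd=5 and ie=0 and m=1 and b=b and c=c and d=d])
    prefer 14 apply (unfold C6_edge_def, elim insertE emptyE; simp)
    using w by (simp_all add: C6_edge_def)
next
  assume "embeds {0..<6} two_squares_edge V E"
  then obtain \<phi> where p: "inj_on \<phi> {0..<6}" "\<phi> ` {0..<6} \<subseteq> V"
      "\<forall>x\<in>{0..<6}. \<forall>y\<in>{0..<6}. two_squares_edge x y \<longleftrightarrow> E (\<phi> x) (\<phi> y)"
    unfolding embeds_def by blast
  show ?thesis
    apply (rule shortcut_generic[OF G H p, where ia=1 and ib=0 and ic=5 and idd=4 and ie=3 and m=2 and b=b and c=c and d=d])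
    prefer 14 apply (unfold two_squares_edge_def C6_edge_def, elim insertE emptyE; simp)
    using w by (simp_all add: C6_edge_def two_squares_edge_def)
qed



lemma gdist_le3:
  assumes G: "graph V E" and C: "connected V E" and H: "C_HH V E"
    and emb: "embeds {0..<6} C6_edge V E \<or> embeds {0..<6} two_squares_edge V E"
    and x: "x \<in> V" and y: "y \<in> V"
  shows "gdist V E x y \<le> 3"
proof -
  obtain xs where xs: "walk V E xs" "hd xs = x" "last xs = y" using gdist_walk[OF C x y] by blast
  have sc: "\<And>a b c d e. walk V E [a,b,c,d,e] \<Longrightarrow> \<exists>u\<in>V. E a u \<and> E u e"
    using shortcut[OF G H emb] by blast
  have "\<exists>ys. walk V E ys \<and> hd ys = hd xs \<and> last ys = last xs \<and> length ys \<le> 4"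
    by (rule walk_shorten[OF _ xs(1)]) (rule sc)
  then obtain ys where
    ys0: "walk V E ys" "hd ys = hd xs" "last ys = last xs" "length ys \<le> 4" by blast
  then have ys: "walk V E ys" "hd ys = x" "last ys = y" "length ys \<le> 4" using xs(2,3) by simp_all
  show ?thesis using gdist_le[OF ys(1-3)] ys(4) by simp
qed

lemma path3_sides:
  assumes B: "bipartition V E P Q" and e: "E a b" "E b c" "E c d"
  shows "(a \<in> P \<longrightarrow> d \<in> Q) \<and> (a \<in> Q \<longrightarrow> d \<in> P)"
  using bip_PQ[OF B] bip_QP[OF B] e by blast

lemma gdist_ge3:
  assumes G: "graph V E" and C: "connected V E" and B: "bipartition V E P Q"
    and x: "x \<in> V" and y: "y \<in> V" and ne: "x \<noteq> y" and nE: "\<not> E x y"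
    and s1: "x \<in> P \<Longrightarrow> y \<in> Q" and s2: "x \<in> Q \<Longrightarrow> y \<in> P"
  shows "3 \<le> gdist V E x y"
proof (rule ccontr)
  assume "\<not> 3 \<le> gdist V E x y"
  then have n: "gdist V E x y < 3" by simp
  obtain xs where xs: "walk V E xs" "hd xs = x" "last xs = y" "length xs = Suc (gdist V E x y)"
    using gdist_walk[OF C x y] by blast
  have "gdist V E x y = 0 \<or> gdist V E x y = 1 \<or> gdist V E x y = 2" using n by auto
  then show False
  proof (elim disjE)
    assume "gdist V E x y = 0"
    then obtain a where "xs = [a]" using xs(4) by (auto simp: length_Suc_conv)
    then show False using xs ne by simp
  next
    assume "gdist V E x y = 1"
    then obtain a b where "xs = [a,b]" using xs(4) by (auto simp: length_Suc_conv)
    then show False using xs nE by simp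
  next
    assume "gdist V E x y = 2"
    then obtain a b c where abc: "xs = [a,b,c]" using xs(4) by (auto simp: length_Suc_conv numeral_2_eq_2)
    then have "E x b" "E b y" using xs by auto
    moreover have "x \<in> P \<or> x \<in> Q" using x bip_V[OF B] by auto
    ultimately show False using s1 s2 bip_PQ[OF B] bip_QP[OF B] bip_disj[OF B] by metis
  qed
qed

lemma part_i:
  assumes G: "graph V E" and C: "connected V E" and B: "bipartition V E X Y" and H: "C_HH V E"
    and emb: "embeds {0..<6} C6_edge V E \<or> embeds {0..<6} two_squares_edge V E"
  shows "diam V E = 3"
proof -
  have sym: "\<And>x y. E x y \<Longrightarrow> E y x" using graph_sym[OF G] by blast
  obtain u w where uw: "u \<in> V" "w \<in> V" "u \<noteq> w" "\<not> E u w"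
      "u \<in> X \<Longrightarrow> w \<in> Y" "u \<in> Y \<Longrightarrow> w \<in> X"
    using emb
  proof
    assume "embeds {0..<6} C6_edge V E"
    then obtain \<phi> where p: "inj_on \<phi> {0..<6}" "\<phi> ` {0..<6} \<subseteq> V"
        "\<forall>x\<in>{0..<6}. \<forall>y\<in>{0..<6}. C6_edge x y \<longleftrightarrow> E (\<phi> x) (\<phi> y)"
      unfolding embeds_def by blast
    have iso: "\<And>i j. i<6 \<Longrightarrow> j<6 \<Longrightarrow> C6_edge i j \<longleftrightarrow> E (\<phi> i) (\<phi> j)" using p(3) by auto
    have e: "E (\<phi> 0) (\<phi> 1)" "E (\<phi> 1) (\<phi> 2)" "E (\<phi> 2) (\<phi> 3)" "\<not> E (\<phi> 0) (\<phi> 3)"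
      using iso[of 0 1] iso[of 1 2] iso[of 2 3] iso[of 0 3] by (simp_all add: C6_edge_def)
    have "\<phi> 0 \<noteq> \<phi> 3" using p(1) unfolding inj_on_def by fastforce
    moreover have "\<phi> 0 \<in> V" "\<phi> 3 \<in> V" using p(2) by auto
    ultimately show thesis using that e path3_sides[OF B e(1-3)] by blast
  next
    assume "embeds {0..<6} two_squares_edge V E"
    then obtain \<phi> where p: "inj_on \<phi> {0..<6}" "\<phi> ` {0..<6} \<subseteq> V"
        "\<forall>x\<in>{0..<6}. \<forall>y\<in>{0..<6}. two_squares_edge x y \<longleftrightarrow> E (\<phi> x) (\<phi> y)"
      unfolding embeds_def by blast
    have iso: "\<And>i j. i<6 \<Longrightarrow> j<6 \<Longrightarrow> two_squares_edge i j \<longleftrightarrow> E (\<phi> i) (\<phi> j)" using p(3) by auto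
    have e: "E (\<phi> 0) (\<phi> 5)" "E (\<phi> 5) (\<phi> 2)" "E (\<phi> 2) (\<phi> 3)" "\<not> E (\<phi> 0) (\<phi> 3)"
      using iso[of 0 5] iso[of 5 2] iso[of 2 3] iso[of 0 3] by (simp_all add: C6_edge_def two_squares_edge_def)
    have "\<phi> 0 \<noteq> \<phi> 3" using p(1) unfolding inj_on_def by fastforce
    moreover have "\<phi> 0 \<in> V" "\<phi> 3 \<in> V" using p(2) by auto
    ultimately show thesis using that e path3_sides[OF B e(1-3)] by blast
  qed
  have g3: "gdist V E u w = 3"
    using gdist_ge3[OF G C B uw] gdist_le3[OF G C H emb uw(1,2)] by simp
  let ?D = "{gdist V E x y | x y. x \<in> V \<and> y \<in> V}"
  have fin: "finite ?D" using graph_fin[OF G] by (intro finite_image_set2) auto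
  show ?thesis unfolding diam_def
  proof (rule Max_eqI[OF fin])
    show "\<And>d. d \<in> ?D \<Longrightarrow> d \<le> 3" using gdist_le3[OF G C H emb] by blast
    show "3 \<in> ?D" using g3 uw by force
  qed
qed



lemma three_elems:
  assumes "finite B" "3 \<le> card B"
  shows "\<exists>m\<in>B. m \<noteq> a \<and> m \<noteq> b"
proof -
  have "card B - card {a,b} \<le> card (B - {a,b})" by (rule diff_card_le_card_Diff) simp
  moreover have "card {a,b} \<le> 2" by (simp add: card_insert_if)
  ultimately have "card (B - {a,b}) > 0" using assms by linarith
  then have "B - {a,b} \<noteq> {}" by (metis card.empty less_irrefl)
  then show ?thesis by blast
qed

lemma C_HH_ext:
  assumes "C_HH V E" "S \<subseteq> V" "finite S" "connected S E" "hom S E V E f"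
  shows "\<exists>g. hom V E V E g \<and> (\<forall>x\<in>S. g x = f x)"
  using assms unfolding C_HH_def by blast

lemma partners:
  assumes IH: "\<And>S. S \<subseteq> P \<Longrightarrow> card S < k \<Longrightarrow> \<exists>v. common_neighbour V E S v"
    and BP: "B \<subseteq> P" and fin: "finite B" and cB: "card B = k"
  shows "\<exists>c. \<forall>b\<in>B. common_neighbour V E (B - {b}) (c b)"
proof -
  have "\<forall>b\<in>B. \<exists>v. common_neighbour V E (B - {b}) v"
  proof
    fix b assume b: "b \<in> B"
    have "card B > 0" using b fin by (auto simp: card_gt_0_iff)
    then have "card (B - {b}) < k" using b fin cB by (simp add: card_Diff_singleton)
    then show "\<exists>v. common_neighbour V E (B - {b}) v" using IH BP by blast
  qed
  then show ?thesis by metis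
qed

lemma step_bad:
  assumes G: "graph V E" and B: "bipartition V E P Q" and H: "C_HH V E"
    and IH: "\<And>S. S \<subseteq> P \<Longrightarrow> card S < k \<Longrightarrow> \<exists>v. common_neighbour V E S v"
    and BP: "B' \<subseteq> P" and cB: "card B' = k" and k3: "3 \<le> k"
    and bad: "\<not> (\<exists>v. common_neighbour V E B' v)"
    and b1: "b1 \<in> B'" and bp: "bp \<in> P" and bpn: "bp \<notin> B'"
  shows "\<not> (\<exists>v. common_neighbour V E (insert bp (B' - {b1})) v)"
proof
  have sym: "\<And>x y. E x y \<Longrightarrow> E y x" using graph_sym[OF G] by blast
  have PV: "P \<subseteq> V" using bip_V[OF B] by auto
  have fin: "finite B'" by (rule finite_subset[OF _ graph_fin[OF G]]) (use BP PV in auto)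
  assume "\<exists>v. common_neighbour V E (insert bp (B' - {b1})) v"
  then obtain z where z: "z \<in> V" "\<And>s. s \<in> insert bp (B' - {b1}) \<Longrightarrow> E z s"
    unfolding common_neighbour_def by blast
  obtain c where c: "\<And>b. b \<in> B' \<Longrightarrow> common_neighbour V E (B' - {b}) (c b)"
    using partners[OF IH BP fin cB] by blast
  have cV: "\<And>b. b \<in> B' \<Longrightarrow> c b \<in> V" using c unfolding common_neighbour_def by blast
  have cE: "\<And>b b''. b \<in> B' \<Longrightarrow> b'' \<in> B' \<Longrightarrow> b'' \<noteq> b \<Longrightarrow> E (c b) b''"
    using c unfolding common_neighbour_def by blast
  have ne: "bp \<noteq> b1" using b1 bpn by auto
  have c2: "card {bp, b1} < k" using ne k3 by simp
  have s2: "{bp, b1} \<subseteq> P" using bp b1 BP by auto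
  obtain yv where "common_neighbour V E {bp, b1} yv" using IH[OF s2 c2] by blast
  then have y: "yv \<in> V" "E yv bp" "E yv b1" unfolding common_neighbour_def by auto
  define T where "T = insert bp (insert yv (B' \<union> c ` (B' - {b1})))"
  define f where "f x = (if x = bp then b1 else x)" for x
  have TV: "T \<subseteq> V" unfolding T_def using bp PV y BP cV by auto
  have Tfin: "finite T" unfolding T_def using fin by simp
  have key: "E b1 t" if t: "t \<in> T" and e: "E bp t" for t
  proof -
    have "t \<noteq> bp" using e graph_irr[OF G] by blast
    then have "t = yv \<or> t \<in> B' \<or> t \<in> c ` (B' - {b1})" using t unfolding T_def by auto
    then show ?thesis
    proof (elim disjE)
      assume "t = yv" then show ?thesis using y sym by blast
    next
      assume "t \<in> B'" then show ?thesis using bip_PP[OF B e bp] BP by blast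
    next
      assume "t \<in> c ` (B' - {b1})"
      then obtain b where "b \<in> B'" "b \<noteq> b1" "t = c b" by auto
      then show ?thesis using cE[of b b1] b1 sym by blast
    qed
  qed
  have hom: "hom T E V E f" unfolding hom_def
  proof (intro conjI ballI impI)
    show "f ` T \<subseteq> V" using TV b1 BP PV unfolding f_def by auto
  next
    fix x y assume x: "x \<in> T" and yT: "y \<in> T" and e: "E x y"
    show "E (f x) (f y)"
    proof (cases "x = bp")
      case True
      then have "y \<noteq> bp" using e graph_irr[OF G] by blast
      then show ?thesis using True key[OF yT] e unfolding f_def by simp
    next
      case False
      show ?thesis
      proof (cases "y = bp")
        case True
        then show ?thesis using False key[OF x] e sym unfolding f_def by simp
      next
        case False2: False
        then show ?thesis using False e unfolding f_def by simp
      qed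
    qed
  qed
  have b1T: "b1 \<in> T" unfolding T_def using b1 by auto
  have conn: "connected T E"
  proof (rule connected_hub[OF sym b1T])
    fix x assume x: "x \<in> T"
    have yT: "yv \<in> T" and bpT: "bp \<in> T" unfolding T_def by auto
    have cT: "\<And>b. b \<in> B' \<Longrightarrow> b \<noteq> b1 \<Longrightarrow> c b \<in> T" unfolding T_def by auto
    have BT: "\<And>b. b \<in> B' \<Longrightarrow> b \<in> T" unfolding T_def by auto
    have "x = bp \<or> x = yv \<or> x \<in> B' \<or> x \<in> c ` (B' - {b1})" using x unfolding T_def by auto
    then show "\<exists>xs. walk T E xs \<and> hd xs = b1 \<and> last xs = x"
    proof (elim disjE)
      assume "x = bp"
      then show ?thesis using b1T yT bpT y sym by (intro exI[of _ "[b1, yv, bp]"]) auto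
    next
      assume "x = yv"
      then show ?thesis using b1T yT y sym by (intro exI[of _ "[b1, yv]"]) auto
    next
      assume xB: "x \<in> B'"
      show ?thesis
      proof (cases "x = b1")
        case True then show ?thesis using b1T by (intro exI[of _ "[b1]"]) auto
      next
        case False
        obtain m where m: "m \<in> B'" "m \<noteq> b1" "m \<noteq> x" using three_elems[OF fin, of b1 x] cB k3 by auto
        have "E b1 (c m)" using cE[OF m(1) b1] m sym by blast
        moreover have "E (c m) x" using cE[OF m(1) xB] m by blast
        ultimately show ?thesis using b1T cT[OF m(1,2)] BT[OF xB]
          by (intro exI[of _ "[b1, c m, x]"]) auto
      qed
    next
      assume "x \<in> c ` (B' - {b1})"
      then obtain b where b: "b \<in> B'" "b \<noteq> b1" "x = c b" by auto
      have "E b1 (c b)" using cE[OF b(1) b1] b sym by blast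
      then show ?thesis using b1T cT[OF b(1,2)] b by (intro exI[of _ "[b1, c b]"]) auto
    qed
  qed
  obtain g where g0: "hom V E V E g" "\<forall>x\<in>T. g x = f x"
    using C_HH_ext[OF H TV Tfin conn hom] by blast
  have g: "hom V E V E g" "\<And>x. x \<in> T \<Longrightarrow> g x = f x" using g0 by auto
  have gV: "g z \<in> V" using g(1) z(1) unfolding hom_def by blast
  have bpV: "bp \<in> V" using bp PV by auto
  have "common_neighbour V E B' (g z)" unfolding common_neighbour_def
  proof (intro conjI ballI)
    show "g z \<in> V" by (rule gV)
    fix s assume s: "s \<in> B'"
    show "E (g z) s"
    proof (cases "s = b1")
      case True
      have "E z bp" using z(2) by blast
      then have "E (g z) (g bp)" using g(1) z(1) bpV unfolding hom_def by blast
      moreover have "g bp = b1" using g(2) unfolding T_def f_def by simp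
      ultimately show ?thesis using True by simp
    next
      case False
      have "E z s" using z(2) s False by blast
      moreover have "s \<in> V" using s BP PV by auto
      ultimately have "E (g z) (g s)" using g(1) z(1) unfolding hom_def by blast
      moreover have "g s = s" using g(2)[of s] s bpn unfolding T_def f_def by auto
      ultimately show ?thesis by simp
    qed
  qed
  then show False using bad by blast
qed



lemma flip_bad:
  assumes G: "graph V E" and B: "bipartition V E P Q" and H: "C_HH V E"
    and IH: "\<And>S. S \<subseteq> P \<Longrightarrow> card S < k \<Longrightarrow> \<exists>v. common_neighbour V E S v"
    and BP: "B' \<subseteq> P" and cB: "card B' = k" and k3: "3 \<le> k"
    and bad: "\<not> (\<exists>v. common_neighbour V E B' v)"
  shows "\<exists>B''. B'' \<subseteq> Q \<and> card B'' = k \<and> \<not> (\<exists>v. common_neighbour V E B'' v)"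
proof -
  have sym: "\<And>x y. E x y \<Longrightarrow> E y x" using graph_sym[OF G] by blast
  have PV: "P \<subseteq> V" using bip_V[OF B] by auto
  have fin: "finite B'" by (rule finite_subset[OF _ graph_fin[OF G]]) (use BP PV in auto)
  obtain c where c: "\<And>b. b \<in> B' \<Longrightarrow> common_neighbour V E (B' - {b}) (c b)"
    using partners[OF IH BP fin cB] by blast
  have cV: "\<And>b. b \<in> B' \<Longrightarrow> c b \<in> V" using c unfolding common_neighbour_def by blast
  have cE: "\<And>b b''. b \<in> B' \<Longrightarrow> b'' \<in> B' \<Longrightarrow> b'' \<noteq> b \<Longrightarrow> E (c b) b''"
    using c unfolding common_neighbour_def by blast
  have cN: "\<not> E (c b) b" if b: "b \<in> B'" for b
  proof
    assume "E (c b) b"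
    then have "common_neighbour V E B' (c b)" using cE[OF b] cV[OF b] unfolding common_neighbour_def by blast
    then show False using bad by blast
  qed
  have cQ: "c b \<in> Q" if b: "b \<in> B'" for b
  proof -
    obtain m where m: "m \<in> B'" "m \<noteq> b" using three_elems[OF fin, of b b] cB k3 by auto
    have "E m (c b)" using cE[OF b m(1) m(2)] sym by blast
    then show ?thesis using bip_PQ[OF B] m(1) BP by blast
  qed
  have inj: "inj_on c B'"
  proof (rule inj_onI)
    fix x y assume x: "x \<in> B'" and y: "y \<in> B'" and e: "c x = c y"
    show "x = y"
    proof (rule ccontr)
      assume "x \<noteq> y"
      then have "E (c y) x" using cE[OF y x] by blast
      then show False using cN[OF x] e by simp
    qed
  qed
  have notB: "c b \<notin> B'" if "b \<in> B'" for b using cQ[OF that] BP bip_disj[OF B] by blast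
  have inv: "inv_into B' c (c b) = b" if "b \<in> B'" for b using inv_into_f_f[OF inj that] .
  show ?thesis
  proof (intro exI conjI)
    show "c ` B' \<subseteq> Q" using cQ by auto
    show "card (c ` B') = k" using card_image[OF inj] cB by simp
    show "\<not> (\<exists>v. common_neighbour V E (c ` B') v)"
    proof
      assume "\<exists>v. common_neighbour V E (c ` B') v"
      then obtain x where x: "x \<in> V" "\<And>b. b \<in> B' \<Longrightarrow> E x (c b)"
        unfolding common_neighbour_def by blast
      define T where "T = B' \<union> c ` B'"
      define f where "f u = (if u \<in> B' then c u else inv_into B' c u)" for u
      have TV: "T \<subseteq> V" unfolding T_def using BP PV cV by auto
      have Tfin: "finite T" unfolding T_def using fin by simp
      have fB: "f b = c b" if "b \<in> B'" for b using that unfolding f_def by simp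
      have fc: "f (c b) = b" if "b \<in> B'" for b using that notB inv unfolding f_def by simp
      have hom: "hom T E V E f" unfolding hom_def
      proof (intro conjI ballI impI)
        show "f ` T \<subseteq> V"
        proof
          fix u assume "u \<in> f ` T"
          then obtain t where t: "t \<in> T" "u = f t" by blast
          show "u \<in> V"
          proof (cases "t \<in> B'")
            case True then show ?thesis using t fB cV by simp
          next
            case False
            then obtain b where "b \<in> B'" "t = c b" using t unfolding T_def by blast
            then show ?thesis using t fc BP PV by auto
          qed
        qed
      next
        fix u w assume u: "u \<in> T" and w: "w \<in> T" and e: "E u w"
        show "E (f u) (f w)"
        proof (cases "u \<in> B'")
          case uB: True
          show ?thesis
          proof (cases "w \<in> B'")
            case True then show ?thesis using bip_PP[OF B e] uB BP by blast
          next
            case False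
            then obtain b where b: "b \<in> B'" "w = c b" using w unfolding T_def by blast
            have "u \<noteq> b" using e b cN sym by blast
            then have "E (c u) b" using cE[OF uB b(1)] by blast
            then show ?thesis using fB[OF uB] fc[OF b(1)] b by simp
          qed
        next
          case uN: False
          then obtain b where b: "b \<in> B'" "u = c b" using u unfolding T_def by blast
          show ?thesis
          proof (cases "w \<in> B'")
            case wB: True
            have "w \<noteq> b" using e b cN by blast
            then have "E (c w) b" using cE[OF wB b(1)] by blast
            then show ?thesis using fB[OF wB] fc[OF b(1)] b sym by simp
          next
            case False
            then obtain b2 where b2: "b2 \<in> B'" "w = c b2" using w unfolding T_def by blast
            show ?thesis using bip_QQ[OF B e] cQ b b2 by blast
          qed
        qed
      qed
      obtain b0 where b0: "b0 \<in> B'" using three_elems[OF fin] cB k3 by blast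
      have b0T: "b0 \<in> T" unfolding T_def using b0 by auto
      have BT: "\<And>b. b \<in> B' \<Longrightarrow> b \<in> T" unfolding T_def by auto
      have cT: "\<And>b. b \<in> B' \<Longrightarrow> c b \<in> T" unfolding T_def by auto
      have conn: "connected T E"
      proof (rule connected_hub[OF sym b0T])
        fix t assume t: "t \<in> T"
        show "\<exists>xs. walk T E xs \<and> hd xs = b0 \<and> last xs = t"
        proof (cases "t \<in> B'")
          case tB: True
          show ?thesis
          proof (cases "t = b0")
            case True then show ?thesis using b0T by (intro exI[of _ "[b0]"]) auto
          next
            case False
            obtain m where m: "m \<in> B'" "m \<noteq> b0" "m \<noteq> t" using three_elems[OF fin, of b0 t] cB k3 by auto
            have "E b0 (c m)" using cE[OF m(1) b0] m sym by blast
            moreover have "E (c m) t" using cE[OF m(1) tB] m by blast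
            ultimately show ?thesis using b0T cT[OF m(1)] BT[OF tB]
              by (intro exI[of _ "[b0, c m, t]"]) auto
          qed
        next
          case False
          then obtain b where b: "b \<in> B'" "t = c b" using t unfolding T_def by blast
          show ?thesis
          proof (cases "b = b0")
            case False
            have "E b0 (c b)" using cE[OF b(1) b0] False sym by blast
            then show ?thesis using b0T cT[OF b(1)] b by (intro exI[of _ "[b0, c b]"]) auto
          next
            case True
            obtain m1 where m1: "m1 \<in> B'" "m1 \<noteq> b0" using three_elems[OF fin, of b0 b0] cB k3 by auto
            obtain m2 where m2: "m2 \<in> B'" "m2 \<noteq> b0" "m2 \<noteq> m1" using three_elems[OF fin, of b0 m1] cB k3 by auto
            have "E b0 (c m1)" using cE[OF m1(1) b0] m1 sym by blast
            moreover have "E (c m1) m2" using cE[OF m1(1) m2(1)] m2 by blast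
            moreover have "E m2 (c b0)" using cE[OF b0 m2(1)] m2 sym by blast
            ultimately show ?thesis using b0T cT[OF m1(1)] BT[OF m2(1)] cT[OF b0] b True
              by (intro exI[of _ "[b0, c m1, m2, c b0]"]) auto
          qed
        qed
      qed
      obtain g where g0: "hom V E V E g" "\<forall>u\<in>T. g u = f u"
        using C_HH_ext[OF H TV Tfin conn hom] by blast
      have "common_neighbour V E B' (g x)" unfolding common_neighbour_def
      proof (intro conjI ballI)
        show "g x \<in> V" using g0(1) x(1) unfolding hom_def by blast
        fix b assume b: "b \<in> B'"
        have "E (g x) (g (c b))" using g0(1) x(1) x(2)[OF b] cV[OF b] unfolding hom_def by blast
        moreover have "g (c b) = b" using g0(2) cT[OF b] fc[OF b] by simp
        ultimately show "E (g x) b" by simp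
      qed
      then show False using bad by blast
    qed
  qed
qed

lemma chain_bad:
  assumes G: "graph V E" and B: "bipartition V E P Q" and H: "C_HH V E"
    and IH: "\<And>S. S \<subseteq> P \<Longrightarrow> card S < k \<Longrightarrow> \<exists>v. common_neighbour V E S v"
    and k3: "3 \<le> k" and WP: "W \<subseteq> P" and cW: "card W = k"
  shows "B' \<subseteq> P \<Longrightarrow> card B' = k \<Longrightarrow> \<not> (\<exists>v. common_neighbour V E B' v) \<Longrightarrow>
      \<not> (\<exists>v. common_neighbour V E W v)"
proof (induction "card (W - B')" arbitrary: B')
  case 0
  have PV: "P \<subseteq> V" using bip_V[OF B] by auto
  have finW: "finite W" by (rule finite_subset[OF _ graph_fin[OF G]]) (use WP PV in auto)
  have finB: "finite B'" by (rule finite_subset[OF _ graph_fin[OF G]]) (use 0 PV in auto)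
  have "W - B' = {}" using 0 finW by simp
  then have "W \<subseteq> B'" by blast
  then have "W = B'" using card_subset_eq[OF finB] cW 0 by simp
  then show ?case using 0 by simp
next
  case (Suc n)
  have PV: "P \<subseteq> V" using bip_V[OF B] by auto
  have finW: "finite W" by (rule finite_subset[OF _ graph_fin[OF G]]) (use WP PV in auto)
  have finB: "finite B'" by (rule finite_subset[OF _ graph_fin[OF G]]) (use Suc.prems PV in auto)
  have "W - B' \<noteq> {}" using Suc.hyps(2) by (metis card.empty nat.simps(3))
  then obtain w where w: "w \<in> W" "w \<notin> B'" by blast
  have "B' - W \<noteq> {}"
  proof
    assume "B' - W = {}"
    then have "B' \<subseteq> W" by blast
    then have "B' = W" using card_subset_eq[OF finW] cW Suc.prems by simp
    then show False using w by simp
  qed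
  then obtain b where b: "b \<in> B'" "b \<notin> W" by blast
  define B2 where "B2 = insert w (B' - {b})"
  have bad2: "\<not> (\<exists>v. common_neighbour V E B2 v)"
    unfolding B2_def using step_bad[OF G B H IH Suc.prems(1,2) k3 Suc.prems(3) b(1)] w WP by blast
  have B2P: "B2 \<subseteq> P" unfolding B2_def using w WP Suc.prems(1) by auto
  have cB2: "card B2 = k" unfolding B2_def using finB b w Suc.prems(2) k3
    by (simp add: card_insert_if card_Diff_singleton)
  have "W - B2 = (W - B') - {w}" unfolding B2_def using b by auto
  then have "card (W - B2) = n" using Suc.hyps(2) w by (simp add: card_Diff_singleton)
  then show ?case using Suc.hyps(1) B2P cB2 bad2 by blast
qed



lemma diam_le:
  assumes G: "graph V E" and x: "x \<in> V" and y: "y \<in> V"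
  shows "gdist V E x y \<le> diam V E"
proof -
  let ?D = "{gdist V E x y | x y. x \<in> V \<and> y \<in> V}"
  have fin: "finite ?D" using graph_fin[OF G] by (intro finite_image_set2) auto
  show ?thesis unfolding diam_def by (rule Max_ge[OF fin]) (use x y in blast)
qed

lemma gdist_refl: "x \<in> V \<Longrightarrow> gdist V E x x = 0"
  using gdist_le[of V E "[x]" x x] by simp

lemma diam_two:
  assumes G: "graph V E" and C: "connected V E" and D: "diam V E = 3"
  shows "\<exists>x\<in>V. \<exists>y\<in>V. x \<noteq> y"
proof -
  let ?D = "{gdist V E x y | x y. x \<in> V \<and> y \<in> V}"
  have fin: "finite ?D" using graph_fin[OF G] by (intro finite_image_set2) auto
  have ne: "?D \<noteq> {}" using C unfolding connected_def by blast
  have "diam V E \<in> ?D" unfolding diam_def using Max_in[OF fin ne] .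
  then obtain x y where "x \<in> V" "y \<in> V" "gdist V E x y = 3" using D by auto
  then show ?thesis using gdist_refl[of x V E] by force
qed

lemma has_nbr:
  assumes G: "graph V E" and C: "connected V E" and D: "diam V E = 3" and s: "s \<in> V"
  shows "\<exists>u. E s u"
proof -
  obtain t where t: "t \<in> V" "t \<noteq> s" using diam_two[OF G C D] by blast
  obtain xs where xs: "walk V E xs" "hd xs = s" "last xs = t" using C s t unfolding connected_def by blast
  show ?thesis
  proof (cases xs)
    case Nil then show ?thesis using xs walk_nonempty by blast
  next
    case (Cons a rest)
    show ?thesis
    proof (cases rest)
      case Nil then show ?thesis using Cons xs t by simp
    next
      case (Cons b rest2)
      then show ?thesis using \<open>xs = a # rest\<close> xs by auto
    qed
  qed
qed

lemma pair_cn: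
  assumes G: "graph V E" and C: "connected V E" and B: "bipartition V E P Q" and D: "diam V E = 3"
    and x: "x \<in> P" and y: "y \<in> P" and ne: "x \<noteq> y"
  shows "\<exists>m. common_neighbour V E {x,y} m"
proof -
  have PV: "P \<subseteq> V" using bip_V[OF B] by auto
  have xV: "x \<in> V" and yV: "y \<in> V" using x y PV by auto
  have sym: "\<And>x y. E x y \<Longrightarrow> E y x" using graph_sym[OF G] by blast
  obtain xs where xs: "walk V E xs" "hd xs = x" "last xs = y" "length xs = Suc (gdist V E x y)"
    using gdist_walk[OF C xV yV] by blast
  have le: "gdist V E x y \<le> 3" using diam_le[OF G xV yV] D by simp
  then have "gdist V E x y = 0 \<or> gdist V E x y = 1 \<or> gdist V E x y = 2 \<or> gdist V E x y = 3" by auto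
  then show ?thesis
  proof (elim disjE)
    assume "gdist V E x y = 0"
    then obtain a where "xs = [a]" using xs(4) by (auto simp: length_Suc_conv)
    then show ?thesis using xs ne by simp
  next
    assume "gdist V E x y = 1"
    then obtain a b where "xs = [a,b]" using xs(4) by (auto simp: length_Suc_conv)
    then have "E x y" using xs by simp
    then show ?thesis using bip_PP[OF B _ x y] by blast
  next
    assume "gdist V E x y = 2"
    then obtain a b c where abc: "xs = [a,b,c]" using xs(4) by (auto simp: length_Suc_conv numeral_2_eq_2)
    then have "E x b" "E b y" "b \<in> V" using xs by auto
    then have "common_neighbour V E {x,y} b" unfolding common_neighbour_def using sym by blast
    then show ?thesis by blast
  next
    assume "gdist V E x y = 3"
    then obtain a b c d where "xs = [a,b,c,d]" using xs(4) by (auto simp: length_Suc_conv numeral_3_eq_3)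
    then have "E x b" "E b c" "E c y" using xs by auto
    then have "y \<in> Q" using path3_sides[OF B] x by blast
    then show ?thesis using bip_disj[OF B y] by blast
  qed
qed

lemma final_contra:
  assumes G: "graph V E" and B: "bipartition V E P Q" and H: "C_HH V E"
    and IHP: "\<And>S. S \<subseteq> P \<Longrightarrow> card S < k \<Longrightarrow> \<exists>v. common_neighbour V E S v"
    and IHQ: "\<And>S. S \<subseteq> Q \<Longrightarrow> card S < k \<Longrightarrow> \<exists>v. common_neighbour V E S v"
    and SP: "S \<subseteq> P" and cS: "card S = k" and k3: "3 \<le> k"
    and bad: "\<not> (\<exists>v. common_neighbour V E S v)"
    and kD: "k \<le> max_degree V E" and Vne: "V \<noteq> {}"
  shows False
proof -
  have BQ: "bipartition V E Q P" using bip_sym[OF B] .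
  obtain S2 where S2: "S2 \<subseteq> Q" "card S2 = k" "\<not> (\<exists>v. common_neighbour V E S2 v)"
    using flip_bad[OF G B H IHP SP cS k3 bad] by blast
  have allP: "\<And>W. W \<subseteq> P \<Longrightarrow> card W = k \<Longrightarrow> \<not> (\<exists>v. common_neighbour V E W v)"
    using chain_bad[OF G B H IHP k3 _ _ SP cS bad] by blast
  have allQ: "\<And>W. W \<subseteq> Q \<Longrightarrow> card W = k \<Longrightarrow> \<not> (\<exists>v. common_neighbour V E W v)"
    using chain_bad[OF G BQ H IHQ k3 _ _ S2(1,2,3)] by blast
  have finV: "finite V" using graph_fin[OF G] .
  have "max_degree V E \<in> (\<lambda>v. card {u \<in> V. E v u}) ` V"
    unfolding max_degree_def using Max_in finV Vne by simp
  then obtain v where v: "v \<in> V" "card {u \<in> V. E v u} = max_degree V E" by auto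
  have "k \<le> card {u \<in> V. E v u}" using v kD by simp
  then obtain W where W: "W \<subseteq> {u \<in> V. E v u}" "card W = k" by (rule obtain_subset_with_card_n)
  have cn: "common_neighbour V E W v" unfolding common_neighbour_def using W v by auto
  have "v \<in> P \<or> v \<in> Q" using v bip_V[OF B] by auto
  then show False
  proof
    assume "v \<in> P"
    then have "W \<subseteq> Q" using W bip_PQ[OF B] by blast
    then show False using allQ W cn by blast
  next
    assume "v \<in> Q"
    then have "W \<subseteq> P" using W bip_QP[OF B] by blast
    then show False using allP W cn by blast
  qed
qed

lemma part_ii:
  assumes G: "graph V E" and C: "connected V E" and B: "bipartition V E X Y" and H: "C_HH V E"
    and D: "diam V E = 3"
  shows "k \<le> max_degree V E \<Longrightarrow> S \<subseteq> X \<or> S \<subseteq> Y \<Longrightarrow> card S = k \<Longrightarrow> \<exists>v. common_neighbour V E S v"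
proof (induction k arbitrary: S rule: less_induct)
  case (less k)
  have sym: "\<And>x y. E x y \<Longrightarrow> E y x" using graph_sym[OF G] by blast
  have Vne: "V \<noteq> {}" using C unfolding connected_def by blast
  have XV: "X \<subseteq> V" and YV: "Y \<subseteq> V" using bip_V[OF B] by auto
  have SV: "S \<subseteq> V" using less.prems(2) XV YV by blast
  have finS: "finite S" by (rule finite_subset[OF SV graph_fin[OF G]])
  have IHX: "\<exists>v. common_neighbour V E S' v" if "S' \<subseteq> X" "card S' < k" for S'
    using less.IH[of "card S'" S'] that less.prems(1) by simp
  have IHY: "\<exists>v. common_neighbour V E S' v" if "S' \<subseteq> Y" "card S' < k" for S'
    using less.IH[of "card S'" S'] that less.prems(1) by simp
  consider "k = 0" | "k = 1" | "k = 2" | "3 \<le> k" by linarith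
  then show ?case
  proof cases
    case 1
    then have "S = {}" using less.prems(3) finS by simp
    then show ?thesis using Vne unfolding common_neighbour_def by blast
  next
    case 2
    then obtain s where s: "S = {s}" using less.prems(3) by (auto simp: card_Suc_eq)
    then have sV: "s \<in> V" using SV by auto
    obtain u where u: "E s u" using has_nbr[OF G C D sV] by blast
    have "common_neighbour V E S u" unfolding common_neighbour_def s
      using u sym graph_V2[OF G u] by auto
    then show ?thesis by blast
  next
    case 3
    then obtain s t where st: "S = {s,t}" "s \<noteq> t" using less.prems(3) by (auto simp: card_2_iff)
    show ?thesis
      using less.prems(2)
    proof
      assume "S \<subseteq> X"
      then show ?thesis using pair_cn[OF G C B D, of s t] st by auto
    next
      assume "S \<subseteq> Y"
      then show ?thesis using pair_cn[OF G C bip_sym[OF B] D, of s t] st by auto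
    qed
  next
    case 4
    show ?thesis
    proof (rule ccontr)
      assume bad: "\<not> (\<exists>v. common_neighbour V E S v)"
      show False using less.prems(2)
      proof
        assume "S \<subseteq> X"
        then show False using final_contra[OF G B H IHX IHY _ less.prems(3) 4 bad less.prems(1) Vne] by blast
      next
        assume "S \<subseteq> Y"
        then show False using final_contra[OF G bip_sym[OF B] H IHY IHX _ less.prems(3) 4 bad less.prems(1) Vne] by blast
      qed
    qed
  qed
qed


theorem lemma5p9:
  fixes V X Y :: "'a set" and E :: "'a \<Rightarrow> 'a \<Rightarrow> bool"
  assumes "graph V E" and "connected V E" and "bipartition V E X Y" and "C_HH V E"
  shows "(embeds {0..<6} C6_edge V E \<or> embeds {0..<6} two_squares_edge V E \<longrightarrow> diam V E = 3)
    \<and> (diam V E = 3 \<longrightarrow> (\<forall>k \<le> max_degree V E.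
          (\<forall>S. S \<subseteq> X \<and> card S = k \<longrightarrow> (\<exists>v. common_neighbour V E S v)) \<and>
          (\<forall>S. S \<subseteq> Y \<and> card S = k \<longrightarrow> (\<exists>v. common_neighbour V E S v))))"
proof (intro conjI impI allI)
  assume "embeds {0..<6} C6_edge V E \<or> embeds {0..<6} two_squares_edge V E"
  then show "diam V E = 3" using part_i[OF assms] by blast
next
  fix k S assume D: "diam V E = 3" and k: "k \<le> max_degree V E" and S: "S \<subseteq> X \<and> card S = k"
  then show "\<exists>v. common_neighbour V E S v" using part_ii[OF assms D, of k S] by blast
next
  fix k S assume D: "diam V E = 3" and k: "k \<le> max_degree V E" and S: "S \<subseteq> Y \<and> card S = k"
  then show "\<exists>v. common_neighbour V E S v" using part_ii[OF assms D, of k S] by blast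
qed

end
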